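(* Let $N$ be a positive integer and $A$ an $N$-complementable flat layout. If $B$ is a flat layout that is an $N$-complement of $A$, is coalesced, and is sorted, then $B=\mathrm{comp}^\flat(A,N)$.
   Context: A flat layout $L=(s_1,\dots,s_m):(d_1,\dots,d_m)$ has positive integer shape entries and nonnegative integer stride entries, modes $s_i:d_i$; $\mathrm{size}(L)=\prod s_i$, $\mathrm{cosize}(L)=1+\sum(s_i-1)d_i$; layout function $\Phi_L(x)=\sum x_id_i$, $x_i=\lfloor x/(s_1\cdots s_{i-1})\rfloor\bmod s_i$, on $[0,\mathrm{size}(L))$. $L$ is compact if $\Phi_L:[0,\mathrm{size}(L))\to[0,\mathrm{cosize}(L))$ is bijective. $A\star B$ is concatenation of shapes and of strides; $B$ is an $N$-complement of $A$ if $A\star B$ is compact and $\mathrm{size}(A)\mathrm{size}(B)=N$. $L$ is coalesced if no $s_i=1$ and $s_id_i\ne d_{i+1}$ for $1\le i<m$. Order pairs by $s:d\preceq s':d'$ iff $d<d'$ or ($d=d'$ and $s\le s'$); $L$ is sorted if its modes are $\preceq$-nondecreasing, and $\mathrm{sort}(L)$ stably reorders the modes into this order. $\mathrm{squeeze}(L)$ removes modes with $s_i=1$; $\mathrm{coal}^\flat(L)$ is obtained from $\mathrm{squeeze}(L)$ by repeatedly replacing adjacent modes $s_i,s_{i+1}:d_i,d_{i+1}$ with $d_{i+1}=s_id_i$ by $s_is_{i+1}:d_i$. $A$ is $N$-complementable if, writing $\mathrm{sort}(\mathrm{squeeze}(A))=(s_1,\dots,s_m):(d_1,\dots,d_m)$,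 $s_id_i\mid d_{i+1}$ for $1\le i<m$ and $s_md_m\mid N$; then $\mathrm{comp}^\flat(A,N)=\mathrm{coal}^\flat(C)$ with $C=\bigl(d_1,\tfrac{d_2}{s_1d_1},\tfrac{d_3}{s_2d_2},\dots,\tfrac{N}{s_md_m}\bigr):(1,s_1d_1,s_2d_2,\dots,s_md_m)$. *)

theory Defs
  imports Main "HOL-Library.Product_Lexorder"
begin

text \<open>A flat layout is a list of modes (s, d) = shape : stride, with s > 0.\<close>
type_synonym layout = "(nat \<times> nat) list"

definition flat_layout :: "layout \<Rightarrow> bool" where
  "flat_layout L \<longleftrightarrow> (\<forall>(s, d) \<in> set L. 0 < s)"

definition lsize :: "layout \<Rightarrow> nat" where
  "lsize L = prod_list (map fst L)"

definition lcosize :: "layout \<Rightarrow> nat" where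
  "lcosize L = 1 + sum_list (map (\<lambda>(s, d). (s - 1) * d) L)"

definition coord :: "layout \<Rightarrow> nat \<Rightarrow> nat \<Rightarrow> nat" where
  "coord L x i = (x div prod_list (map fst (take i L))) mod fst (L ! i)"

definition layout_fun :: "layout \<Rightarrow> nat \<Rightarrow> nat" where
  "layout_fun L x = (\<Sum>i<length L. coord L x i * snd (L ! i))"

definition compact :: "layout \<Rightarrow> bool" where
  "compact L \<longleftrightarrow> bij_betw (layout_fun L) {0..<lsize L} {0..<lcosize L}"

text \<open>B is an N-complement of A (concatenation A \<star> B is list append).\<close>
definition is_complement :: "nat \<Rightarrow> layout \<Rightarrow> layout \<Rightarrow> bool" where
  "is_complement N A B \<longleftrightarrow> compact (A @ B) \<and> lsize A * lsize B = N"

definition coalesced :: "layout \<Rightarrow> bool" where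
  "coalesced L \<longleftrightarrow> (\<forall>i < length L. fst (L ! i) \<noteq> 1) \<and>
     (\<forall>i. Suc i < length L \<longrightarrow> fst (L ! i) * snd (L ! i) \<noteq> snd (L ! Suc i))"

definition mode_le :: "nat \<times> nat \<Rightarrow> nat \<times> nat \<Rightarrow> bool" where
  "mode_le m m' \<longleftrightarrow> snd m < snd m' \<or> (snd m = snd m' \<and> fst m \<le> fst m')"

definition sorted_layout :: "layout \<Rightarrow> bool" where
  "sorted_layout L \<longleftrightarrow> (\<forall>i. Suc i < length L \<longrightarrow> mode_le (L ! i) (L ! Suc i))"

definition sort_layout :: "layout \<Rightarrow> layout" where
  "sort_layout L = sort_key (\<lambda>(s, d). (d, s)) L"

definition squeeze :: "layout \<Rightarrow> layout" where
  "squeeze L = filter (\<lambda>(s, d). s \<noteq> 1) L"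

fun merge_modes :: "layout \<Rightarrow> layout" where
  "merge_modes [] = []"
| "merge_modes [m] = [m]"
| "merge_modes ((s1, d1) # (s2, d2) # rest) =
     (if d2 = s1 * d1 then merge_modes ((s1 * s2, d1) # rest)
      else (s1, d1) # merge_modes ((s2, d2) # rest))"

definition coal_flat :: "layout \<Rightarrow> layout" where
  "coal_flat L = merge_modes (squeeze L)"

definition complementable :: "nat \<Rightarrow> layout \<Rightarrow> bool" where
  "complementable N A \<longleftrightarrow>
     (let S = sort_layout (squeeze A) in
        (\<forall>i. Suc i < length S \<longrightarrow> fst (S ! i) * snd (S ! i) dvd snd (S ! Suc i)) \<and>
        (S \<noteq> [] \<longrightarrow> fst (last S) * snd (last S) dvd N))"

text \<open>C = (d_1, d_2/(s_1 d_1), ..., N/(s_m d_m)) : (1, s_1 d_1, ..., s_m d_m).\<close>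
definition comp_C :: "nat \<Rightarrow> layout \<Rightarrow> layout" where
  "comp_C N A =
     (let S = sort_layout (squeeze A);
          strides = 1 # map (\<lambda>(s, d). s * d) S;
          nums = map snd S @ [N]
      in map2 (\<lambda>a b. (a div b, b)) nums strides)"

definition comp_flat :: "layout \<Rightarrow> nat \<Rightarrow> layout" where
  "comp_flat A N = coal_flat (comp_C N A)"

end

theory Submission
  imports Defs "HOL-Library.Multiset"
begin

fun lf :: "layout \<Rightarrow> nat \<Rightarrow> nat" where
  "lf [] x = 0"
| "lf ((s,d)#L) x = (x mod s)*d + lf L (x div s)"

lemma coord_Suc: "coord ((s,d)#L) x (Suc i) = coord L (x div s) i"
  unfolding coord_def by (simp add: div_mult2_eq)

lemma coord_0: "coord ((s,d)#L) x 0 = x mod s"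
  unfolding coord_def by simp

lemma layout_fun_Cons: "layout_fun ((s,d)#L) x = (x mod s)*d + layout_fun L (x div s)"
proof -
  have "layout_fun ((s,d)#L) x = coord ((s,d)#L) x 0 * d + (\<Sum>i<length L. coord ((s,d)#L) x (Suc i) * snd (L ! i))"
    unfolding layout_fun_def length_Cons sum.lessThan_Suc_shift by simp
  also have "(\<Sum>i<length L. coord ((s,d)#L) x (Suc i) * snd (L ! i)) = layout_fun L (x div s)"
    unfolding layout_fun_def coord_Suc ..
  finally show ?thesis by (simp only: coord_0)
qed

lemma layout_fun_lf: "layout_fun L x = lf L x"
proof (induction L arbitrary: x)
  case Nil then show ?case by (simp add: layout_fun_def)
next
  case (Cons m L)
  obtain s d where m: "m = (s,d)" by force
  show ?case unfolding m layout_fun_Cons Cons.IH by simp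
qed

fun Img :: "layout \<Rightarrow> nat set" where
  "Img [] = {0}"
| "Img ((s,d)#L) = (\<lambda>(a,y). a*d+y) ` ({0..<s} \<times> Img L)"

lemma Img_image: "Img ((s,d)#L) = (\<lambda>(a,y). a*d+y) ` ({0..<s} \<times> Img L)"
  by simp

lemma mem_Img_Cons: "z \<in> Img ((s,d)#L) \<longleftrightarrow> (\<exists>a<s. \<exists>y\<in>Img L. z = a*d+y)"
  by auto

lemma mem_Img_ConsI: "a < s \<Longrightarrow> y \<in> Img L \<Longrightarrow> z = a*d+y \<Longrightarrow> z \<in> Img ((s,d)#L)"
  unfolding mem_Img_Cons by blast

lemma mem_Img_ConsE: "z \<in> Img ((s,d)#L) \<Longrightarrow> (\<And>a y. a < s \<Longrightarrow> y \<in> Img L \<Longrightarrow> z = a*d+y \<Longrightarrow> P) \<Longrightarrow> P"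
  unfolding mem_Img_Cons by blast

lemma finite_Img: "finite (Img L)"
proof (induction L)
  case Nil then show ?case by simp
next
  case (Cons m L) then show ?case by (cases m) simp
qed

lemma zero_Img: "flat_layout L \<Longrightarrow> 0 \<in> Img L"
proof (induction L)
  case Nil then show ?case by simp
next
  case (Cons m L)
  obtain s d where m: "m = (s,d)" by force
  have "0 < s" "flat_layout L" using Cons.prems by (auto simp: flat_layout_def m)
  then show ?case unfolding m using Cons.IH by (intro mem_Img_ConsI[where a=0 and y=0]) auto
qed

lemma lf_Img: "flat_layout L \<Longrightarrow> lf L ` {0..<lsize L} = Img L"
proof (induction L)
  case Nil then show ?case by (simp add: lsize_def)
next
  case (Cons m L)
  obtain s d where m: "m = (s,d)" by force
  have s: "0 < s" and fl: "flat_layout L" using Cons.prems by (auto simp: flat_layout_def m)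
  have IH: "lf L ` {0..<lsize L} = Img L" using Cons.IH fl .
  have ls: "lsize (m#L) = s * lsize L" by (simp add: lsize_def m)
  show ?case
  proof
    show "lf (m # L) ` {0..<lsize (m # L)} \<subseteq> Img (m # L)"
    proof
      fix z assume "z \<in> lf (m # L) ` {0..<lsize (m # L)}"
      then obtain x where x: "x < s * lsize L" "z = lf (m#L) x" using ls by auto
      have "x div s < lsize L" using x(1) by (simp add: less_mult_imp_div_less mult.commute)
      then have "lf L (x div s) \<in> Img L" using IH by auto
      moreover have "x mod s < s" using s by simp
      ultimately show "z \<in> Img (m#L)" using x unfolding m mem_Img_Cons by auto
    qed
  next
    show "Img (m # L) \<subseteq> lf (m # L) ` {0..<lsize (m # L)}"
    proof
      fix z assume "z \<in> Img (m#L)"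
      then obtain a y where ay: "a < s" "y \<in> Img L" "z = a*d + y" unfolding m mem_Img_Cons by auto
      then obtain w where w: "w < lsize L" "y = lf L w" using IH by force
      have "a + s*w < s * lsize L"
      proof -
        have "a + s*w < s + s*w" using ay by simp
        also have "\<dots> = s*(Suc w)" by simp
        also have "\<dots> \<le> s * lsize L" using w by (intro mult_le_mono2) simp
        finally show ?thesis .
      qed
      moreover have "lf (m#L) (a + s*w) = z" using ay w s by (simp add: m)
      ultimately show "z \<in> lf (m # L) ` {0..<lsize (m # L)}" using ls by force
    qed
  qed
qed

lemma Img_swap_sub: "Img ((s,d)#(t,e)#L) \<subseteq> Img ((t,e)#(s,d)#L)"
proof
  fix z assume "z \<in> Img ((s,d)#(t,e)#L)"
  then obtain a y where a: "a<s" "y \<in> Img((t,e)#L)" "z = a*d+y" by (rule mem_Img_ConsE)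
  then obtain b w where b: "b<t" "w \<in> Img L" "y = b*e + w" by (meson mem_Img_ConsE)
  have h: "a*d+w \<in> Img((s,d)#L)" using a b by (intro mem_Img_ConsI) auto
  show "z \<in> Img ((t,e)#(s,d)#L)" by (rule mem_Img_ConsI[OF b(1) h]) (simp add: a b)
qed

lemma Img_swap: "Img (m1#m2#L) = Img (m2#m1#L)"
proof -
  obtain s d t e where m: "m1 = (s,d)" "m2 = (t,e)" by force
  show ?thesis unfolding m using Img_swap_sub by blast
qed

lemma Img_cons_cong: "Img L1 = Img L2 \<Longrightarrow> Img (m#L1) = Img (m#L2)"
  by (cases m) simp

lemma Img_move: "Img (xs @ m # ys) = Img (m # xs @ ys)"
proof (induction xs)
  case Nil then show ?case by simp
next
  case (Cons x xs)
  have "Img ((x#xs) @ m # ys) = Img (x # m # xs @ ys)" using Img_cons_cong[OF Cons.IH, of x] by simp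
  also have "\<dots> = Img (m # x # xs @ ys)" by (rule Img_swap)
  finally show ?case by simp
qed

lemma Img_perm: "mset L1 = mset L2 \<Longrightarrow> Img L1 = Img L2"
proof (induction L1 arbitrary: L2)
  case Nil then show ?case by (cases L2) auto
next
  case (Cons m L1)
  have "m \<in> set L2" using Cons.prems by (metis list.set_intros(1) set_mset_mset)
  then obtain xs ys where L2: "L2 = xs @ m # ys" by (meson split_list)
  have "mset L1 = mset (xs @ ys)" using Cons.prems L2 by simp
  then have "Img L1 = Img (xs@ys)" using Cons.IH by blast
  then have "Img (m#L1) = Img (m # xs @ ys)" by (rule Img_cons_cong)
  also have "\<dots> = Img L2" unfolding L2 by (rule Img_move[symmetric])
  finally show ?case .
qed

lemma lsize_perm: "mset L1 = mset L2 \<Longrightarrow> lsize L1 = lsize L2"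
  unfolding lsize_def by (metis mset_map prod_mset_prod_list)

lemma Img_one: "Img ((Suc 0,d)#L) = Img L"
  unfolding set_eq_iff mem_Img_Cons by auto

lemma Img_squeeze: "Img (squeeze xs @ ys) = Img (xs @ ys)"
proof (induction xs)
  case Nil then show ?case by (simp add: squeeze_def)
next
  case (Cons m xs)
  obtain s d where m: "m = (s,d)" by force
  show ?case
  proof (cases "s = 1")
    case True
    then show ?thesis using Cons by (simp add: squeeze_def m Img_one del: Img.simps)
  next
    case False
    then show ?thesis using Cons by (simp add: squeeze_def m)
  qed
qed

lemma lsize_squeeze: "lsize (squeeze xs) = lsize xs"
  unfolding lsize_def squeeze_def by (induction xs) auto

lemma card_Img_le: "card (Img L) \<le> lsize L"
proof (induction L)
  case Nil then show ?case by (simp add: lsize_def)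
next
  case (Cons m L)
  obtain s d where m: "m = (s,d)" by force
  have "card (Img (m#L)) \<le> card ({0..<s} \<times> Img L)"
    unfolding m Img_image by (rule card_image_le) (simp add: finite_Img)
  also have "\<dots> = s * card (Img L)" by (simp add: card_cartesian_product)
  also have "\<dots> \<le> s * lsize L" using Cons by simp
  finally show ?case by (simp add: m lsize_def)
qed

lemma card_Img_eq:
  assumes "card (Img ((s,d)#L)) = lsize ((s,d)#L)" "0 < s"
  shows "card (Img L) = lsize L" "inj_on (\<lambda>(a,y). a*d+y) ({0..<s} \<times> Img L)"
proof -
  have fin: "finite ({0..<s} \<times> Img L)" by (simp add: finite_Img)
  have c1: "card (Img ((s,d)#L)) \<le> s * card (Img L)"
    using card_image_le[OF fin, of "\<lambda>(a,y). a*d+y"] by (simp add: card_cartesian_product)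
  have "s * lsize L \<le> s * card (Img L)" using c1 assms by (simp add: lsize_def)
  then show e: "card (Img L) = lsize L" using card_Img_le[of L] assms(2) by simp
  have "card ((\<lambda>(a,y). a*d+y) ` ({0..<s} \<times> Img L)) = card ({0..<s} \<times> Img L)"
    using assms e by (simp add: card_cartesian_product lsize_def)
  then show "inj_on (\<lambda>(a,y). a*d+y) ({0..<s} \<times> Img L)" using eq_card_imp_inj_on fin by blast
qed

declare Img.simps(2)[simp del]

fun chain :: "nat \<Rightarrow> layout \<Rightarrow> bool" where
  "chain k [] = True"
| "chain k ((s,d)#L) = (d = k \<and> chain (s*k) L)"

lemma tiling:
  fixes T :: "nat set"
  assumes s: "0 < s"
    and cover: "\<And>x. x < n \<Longrightarrow> \<exists>a<s. \<exists>t\<in>T. x = a + t"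
    and bnd: "\<And>t. t \<in> T \<Longrightarrow> t < n"
    and inj: "\<And>a a' t t'. a < s \<Longrightarrow> a' < s \<Longrightarrow> t \<in> T \<Longrightarrow> t' \<in> T \<Longrightarrow> a + t = a' + t' \<Longrightarrow> a = a'"
  shows "x < n \<Longrightarrow> (x \<in> T \<longleftrightarrow> s dvd x)"
proof (induction x rule: less_induct)
  case (less x)
  show ?case
  proof
    assume xT: "x \<in> T"
    show "s dvd x"
    proof (rule ccontr)
      assume nd: "\<not> s dvd x"
      define q where "q = x - x mod s"
      have r0: "0 < x mod s" using nd by (metis dvd_eq_mod_eq_0 neq0_conv)
      have q: "q < x" using r0 mod_less_eq_dividend[of x s] unfolding q_def by linarith
      have "s dvd q" unfolding q_def by (simp add: minus_mod_eq_mult_div)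
      then have qT: "q \<in> T" using less.IH[OF q] q less.prems by simp
      have "x mod s + q = 0 + x" unfolding q_def by simp
      then have "x mod s = 0" using inj[OF _ s qT xT] s by simp
      then show False using r0 by simp
    qed
  next
    assume dx: "s dvd x"
    obtain a t where at: "a < s" "t \<in> T" "x = a + t" using cover[OF less.prems] by blast
    show "x \<in> T"
    proof (cases "a = 0")
      case True then show ?thesis using at by simp
    next
      case False
      then have tx: "t < x" using at by simp
      then have "s dvd t" using less.IH[OF tx] at less.prems by simp
      then have "s dvd a" using dx at by (simp add: dvd_add_left_iff)
      then show ?thesis using False at(1) by (simp add: nat_dvd_not_less)
    qed
  qed
qed

lemma Img_lower: "(\<forall>m\<in>set L. d \<le> snd m) \<Longrightarrow> y \<in> Img L \<Longrightarrow> y = 0 \<or> d \<le> y"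
proof (induction L arbitrary: y)
  case Nil then show ?case by simp
next
  case (Cons m L)
  obtain s e where m: "m = (s,e)" by force
  from Cons.prems(2) obtain a z where az: "a < s" "z \<in> Img L" "y = a*e+z" unfolding m by (rule mem_Img_ConsE)
  have de: "d \<le> e" using Cons.prems(1) m by auto
  have "z = 0 \<or> d \<le> z" using Cons.IH[OF _ az(2)] Cons.prems(1) by auto
  show ?case
  proof (cases "a = 0")
    case True then show ?thesis using az \<open>z = 0 \<or> d \<le> z\<close> by simp
  next
    case False
    then have "e \<le> a*e" by simp
    then show ?thesis using az de by linarith
  qed
qed

lemma stride_in_Img: "flat_layout L \<Longrightarrow> (s,d) \<in> set L \<Longrightarrow> 2 \<le> s \<Longrightarrow> d \<in> Img L"
proof (induction L)
  case Nil then show ?case by simp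
next
  case (Cons m L)
  obtain t e where m: "m = (t,e)" by force
  have t: "0 < t" and fl: "flat_layout L" using Cons.prems(1) by (auto simp: flat_layout_def m)
  show ?case
  proof (cases "m = (s,d)")
    case True
    then show ?thesis unfolding m using Cons.prems zero_Img[OF fl] by (intro mem_Img_ConsI[where a=1 and y=0]) auto
  next
    case False
    then have "d \<in> Img L" using Cons fl by auto
    then show ?thesis unfolding m using t by (intro mem_Img_ConsI[where a=0]) auto
  qed
qed

lemma lsize_pos: "flat_layout L \<Longrightarrow> 0 < lsize L"
  by (induction L) (auto simp: flat_layout_def lsize_def)

lemma chain_lemma:
  assumes "sorted (map snd L)" "\<forall>m\<in>set L. 2 \<le> fst m" "0 < k"
    "Img L = (\<lambda>x. k*x) ` {0..<lsize L}" "card (Img L) = lsize L"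
  shows "chain k L"
  using assms
proof (induction L arbitrary: k)
  case Nil then show ?case by simp
next
  case (Cons m L)
  obtain s d where m: "m = (s,d)" by force
  define P where "P = lsize L"
  define n where "n = s * P"
  have s2: "2 \<le> s" using Cons.prems(2) m by auto
  have flL: "flat_layout L" using Cons.prems(2) by (auto simp: flat_layout_def)
  have fl: "flat_layout (m#L)" using Cons.prems(2) by (auto simp: flat_layout_def)
  have P0: "0 < P" unfolding P_def using lsize_pos[OF flL] .
  have ls: "lsize (m#L) = n" by (simp add: n_def P_def lsize_def m)
  have ImgE: "Img ((s,d)#L) = (\<lambda>x. k*x) ` {0..<n}" using Cons.prems(4) unfolding ls by (simp only: m)
  have cardL: "card (Img L) = lsize L" and inj: "inj_on (\<lambda>(a,y). a*d+y) ({0..<s} \<times> Img L)"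
    using card_Img_eq[of s d L] Cons.prems(5) s2 m by auto
  have sortL: "sorted (map snd L)" using Cons.prems(1) by simp
  have lowL: "\<forall>m'\<in>set L. d \<le> snd m'" using Cons.prems(1) m by auto
  have memI: "\<And>a y. a < s \<Longrightarrow> y \<in> Img L \<Longrightarrow> \<exists>x<n. a*d+y = k*x"
  proof -
    fix a y assume "a < s" "y \<in> Img L"
    then have "a*d+y \<in> Img ((s,d)#L)" by (intro mem_Img_ConsI) auto
    from this[unfolded ImgE] show "\<exists>x<n. a*d+y = k*x" by auto
  qed
  have injI: "a = a' \<and> y = y'" if "a < s" "a' < s" "y \<in> Img L" "y' \<in> Img L" "a*d+y = a'*d+y'" for a a' y y'
  proof -
    have "(a,y) = (a',y')" using inj_onD[OF inj, of "(a,y)" "(a',y')"] that by simp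
    then show ?thesis by simp
  qed
  have z: "0 \<in> Img L" using zero_Img[OF flL] .
  have d0: "d \<noteq> 0"
  proof
    assume "d = 0"
    then have "0*d+0 = 1*d+0" by simp
    then show False using injI[of 0 1 0 0] z s2 by auto
  qed
  obtain md where md: "d = k*md" using memI[of 1 0] z s2 by force
  have dk: "k \<le> d" using md d0 by simp
  have "2*1 \<le> s*P" using s2 P0 by (intro mult_le_mono) auto
  then have n2: "1 < n" unfolding n_def by linarith
  have "k \<in> (\<lambda>x. k*x) ` {0..<n}" using n2 by (intro image_eqI[where x=1]) auto
  then have "k \<in> Img ((s,d)#L)" by (simp only: ImgE)
  then obtain a y where ay: "a < s" "y \<in> Img L" "k = a*d+y" by (rule mem_Img_ConsE)
  have "y = 0 \<or> d \<le> y" using Img_lower[OF lowL ay(2)] .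
  moreover have "a = 0 \<or> d \<le> a*d" by (cases a) auto
  ultimately have "d \<le> k" using ay Cons.prems(3) by auto
  then have dk': "d = k" using dk by simp
  define T' where "T' = {t. k*t \<in> Img L}"
  have Tmul: "\<exists>t. y = k*t \<and> t < n" if y: "y \<in> Img L" for y
  proof -
    obtain x where "x < n" "0*d+y = k*x" using memI[OF _ y, of 0] s2 by auto
    then show ?thesis by auto
  qed
  have T'_bnd: "\<And>t. t \<in> T' \<Longrightarrow> t < n"
  proof -
    fix t assume "t \<in> T'"
    then obtain t2 where "k*t = k*t2" "t2 < n" using Tmul unfolding T'_def by blast
    then show "t < n" using Cons.prems(3) by simp
  qed
  have T'_cover: "\<And>x. x < n \<Longrightarrow> \<exists>a<s. \<exists>t\<in>T'. x = a + t"
  proof -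
    fix x assume "x < n"
    then have "k*x \<in> Img ((s,d)#L)" unfolding ImgE by auto
    then obtain a y where ay: "a < s" "y \<in> Img L" "k*x = a*d+y" by (rule mem_Img_ConsE)
    obtain t where t: "y = k*t" using Tmul ay(2) by blast
    have "k*x = k*(a+t)" using ay t dk' by (simp add: algebra_simps)
    then have "x = a + t" using Cons.prems(3) by simp
    moreover have "t \<in> T'" using ay t unfolding T'_def by simp
    ultimately show "\<exists>a<s. \<exists>t\<in>T'. x = a + t" using ay by blast
  qed
  have T'_inj: "\<And>a a' t t'. a < s \<Longrightarrow> a' < s \<Longrightarrow> t \<in> T' \<Longrightarrow> t' \<in> T' \<Longrightarrow> a + t = a' + t' \<Longrightarrow> a = a'"
  proof -
    fix a a' t t' assume h: "a < s" "a' < s" "t \<in> T'" "t' \<in> T'" "a + t = a' + t'"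
    have "a*d + k*t = a'*d + k*t'" using h(5) dk' by (metis add_mult_distrib2 mult.commute)
    then show "a = a'" using injI[of a a' "k*t" "k*t'"] h unfolding T'_def by auto
  qed
  have T'_char: "x \<in> T' \<longleftrightarrow> s dvd x" if "x < n" for x
    by (rule tiling[OF _ T'_cover T'_bnd T'_inj that]) (use s2 in simp)
  have ImgL: "Img L = (\<lambda>x. (s*k)*x) ` {0..<lsize L}"
  proof
    show "Img L \<subseteq> (\<lambda>x. (s*k)*x) ` {0..<lsize L}"
    proof
      fix y assume y: "y \<in> Img L"
      then obtain t where t: "y = k*t" "t < n" using Tmul by blast
      then have "t \<in> T'" using y unfolding T'_def by simp
      then have "s dvd t" using T'_char t by simp
      then obtain q where q: "t = s*q" by blast
      then have "q < P" using t n_def s2 by simp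
      moreover have "y = (s*k)*q" using t q by simp
      ultimately show "y \<in> (\<lambda>x. (s*k)*x) ` {0..<lsize L}" using P_def by (intro image_eqI[where x=q]) auto
    qed
  next
    show "(\<lambda>x. (s*k)*x) ` {0..<lsize L} \<subseteq> Img L"
    proof
      fix y assume "y \<in> (\<lambda>x. (s*k)*x) ` {0..<lsize L}"
      then obtain q where q: "q < P" "y = (s*k)*q" using P_def by auto
      have "s*q < n" using q s2 n_def by simp
      then have "s*q \<in> T'" using T'_char by simp
      then show "y \<in> Img L" using q unfolding T'_def by (simp add: algebra_simps)
    qed
  qed
  have a2: "\<forall>m\<in>set L. 2 \<le> fst m" using Cons.prems(2) by simp
  have sk: "0 < s*k" using s2 Cons.prems(3) by simp
  have "chain (s*k) L" by (rule Cons.IH[OF sortL a2 sk ImgL cardL])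
  then show ?case using m dk' by simp
qed

fun cC :: "nat \<Rightarrow> layout \<Rightarrow> nat \<Rightarrow> layout" where
  "cC k [] N = [(N div k, k)]"
| "cC k ((s,d)#A) N = (d div k, k) # cC (s*d) A N"

lemma map2_cC: "map2 (\<lambda>a b. (a div b, b)) (map snd S @ [N]) (k # map (\<lambda>(s,d). s*d) S) = cC k S N"
proof (induction S arbitrary: k)
  case Nil then show ?case by simp
next
  case (Cons m S)
  obtain s d where m: "m = (s,d)" by force
  show ?case using Cons.IH[of "s*d"] by (simp add: m)
qed

lemma comp_C_cC: "comp_C N A = cC 1 (sort_layout (squeeze A)) N"
  unfolding comp_C_def Let_def using map2_cC .

fun nm :: "layout \<Rightarrow> bool" where
  "nm (x#y#L) = (snd y \<noteq> fst x * snd x \<and> nm (y#L))"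
| "nm _ = True"

lemma nm_tl: "nm (x#L) \<Longrightarrow> nm L"
  by (cases L) auto

lemma merge_nm: "nm L \<Longrightarrow> merge_modes L = L"
  by (induction L rule: merge_modes.induct) auto

lemma coalesced_tl: "coalesced (x#L) \<Longrightarrow> coalesced L"
  unfolding coalesced_def
proof (intro conjI allI impI)
  fix i
  assume h: "(\<forall>i<length (x # L). fst ((x # L) ! i) \<noteq> 1) \<and>
    (\<forall>i. Suc i < length (x # L) \<longrightarrow> fst ((x # L) ! i) * snd ((x # L) ! i) \<noteq> snd ((x # L) ! Suc i))"
  { assume "i < length L"
    then show "fst (L ! i) \<noteq> 1" using h[THEN conjunct1, rule_format, of "Suc i"] by simp }
  { assume "Suc i < length L"
    then show "fst (L ! i) * snd (L ! i) \<noteq> snd (L ! Suc i)" using h[THEN conjunct2, rule_format, of "Suc i"] by simp }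
qed

lemma coalesced_nm: "coalesced L \<Longrightarrow> nm L"
proof (induction L rule: nm.induct)
  case (1 x y L)
  have "fst x * snd x \<noteq> snd y" using 1(2) unfolding coalesced_def by (metis length_Cons nth_Cons_0 nth_Cons_Suc zero_less_Suc Suc_less_eq)
  then show ?case using 1 coalesced_tl by auto
qed auto

lemma chain_ge: "chain k L \<Longrightarrow> 0 < k \<Longrightarrow> \<forall>m\<in>set L. 2 \<le> fst m \<Longrightarrow> \<forall>m\<in>set L. k \<le> snd m"
proof (induction L arbitrary: k)
  case Nil then show ?case by simp
next
  case (Cons m L)
  obtain s d where m: "m = (s,d)" by force
  have "chain (s*k) L" "d = k" "2 \<le> s" using Cons.prems m by auto
  then have "\<forall>m\<in>set L. s*k \<le> snd m" using Cons by auto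
  moreover have "k \<le> s*k" using \<open>2 \<le> s\<close> by simp
  ultimately have "\<forall>m\<in>set L. k \<le> snd m" using le_trans by blast
  then show ?case using m \<open>d = k\<close> by auto
qed

lemma head_lemma:
  assumes "sorted (map snd X)" "m \<in> set X" "set X \<subseteq> insert m R" "\<forall>r\<in>R. snd m < snd r"
  shows "\<exists>X'. X = m # X'"
proof (cases X)
  case Nil then show ?thesis using assms by simp
next
  case (Cons x X')
  show ?thesis
  proof (cases "x = m")
    case True then show ?thesis using Cons by simp
  next
    case False
    then have "x \<in> R" using assms(3) Cons by auto
    then have "snd m < snd x" using assms(4) by auto
    moreover have "m \<in> set X'" using assms(2) Cons False by auto
    then have "snd x \<le> snd m" using assms(1) Cons by auto
    ultimately show ?thesis by simp
  qed
qed

lemma U: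
  assumes "chain k L" "0 < k" "\<forall>m\<in>set L. 2 \<le> fst m" "mset L = mset A + mset B"
    "sorted (map snd A)" "sorted (map snd B)" "nm B"
  shows "B = squeeze (cC k A (k * lsize L))"
  using assms
proof (induction L arbitrary: k A B)
  case Nil
  then have "A = []" "B = []" by auto
  then show ?case using Nil.prems(2) by (simp add: squeeze_def lsize_def)
next
  case (Cons m L)
  obtain s d where m: "m = (s,d)" by force
  have dk: "d = k" and chL: "chain (s*k) L" and s2: "2 \<le> s" using Cons.prems(1,3) m by auto
  have sk: "0 < s*k" using s2 Cons.prems(2) by simp
  have a2: "\<forall>m\<in>set L. 2 \<le> fst m" using Cons.prems(3) by simp
  have geL: "\<forall>m\<in>set L. s*k \<le> snd m" using chain_ge[OF chL sk a2] .
  have gtL: "\<forall>r\<in>set L. snd (s,k) < snd r"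
  proof
    fix r assume "r \<in> set L"
    then have "s*k \<le> snd r" using geL by auto
    moreover have "k < s*k" using s2 Cons.prems(2) by simp
    ultimately show "snd (s,k) < snd r" by (metis snd_conv order_less_le_trans)
  qed
  have setAB: "set (m#L) = set A \<union> set B" using Cons.prems(4) by (metis set_mset_mset set_mset_union)
  have lsz: "k * lsize ((s,k)#L) = (s*k) * lsize L" by (simp add: lsize_def)
  show ?case
  proof (cases "(s,k) \<in> set A")
    case True
    obtain A' where A: "A = (s,k)#A'"
      using head_lemma[OF Cons.prems(5) True, of "set L"] setAB gtL m dk by auto
    have ms: "mset L = mset A' + mset B" using Cons.prems(4) A m dk by simp
    have "B = squeeze (cC (s*k) A' ((s*k) * lsize L))"
      using Cons.IH[OF chL sk a2 ms _ Cons.prems(6,7)] Cons.prems(5) A by simp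
    then show ?thesis unfolding A m dk lsz using Cons.prems(2) by (simp add: squeeze_def)
  next
    case False
    then have inB: "(s,k) \<in> set B" using setAB m dk by auto
    obtain B' where B: "B = (s,k)#B'"
      using head_lemma[OF Cons.prems(6) inB, of "set L"] setAB gtL m dk by auto
    have ms: "mset L = mset A + mset B'" using Cons.prems(4) B m dk by simp
    have sB': "sorted (map snd B')" using Cons.prems(6) B by simp
    have nB': "nm B'" using Cons.prems(7) B nm_tl by blast
    have IH: "B' = squeeze (cC (s*k) A ((s*k) * lsize L))"
      using Cons.IH[OF chL sk a2 ms Cons.prems(5) sB' nB'] .
    show ?thesis
    proof (cases L)
      case Nil
      then have "A = []" "B' = []" using ms by auto
      then show ?thesis using B Nil s2 m dk Cons.prems(2) by (simp add: squeeze_def lsize_def)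
    next
      case LC: (Cons m2 L2)
      obtain s2 d2 where m2: "m2 = (s2,d2)" by force
      have d2: "d2 = s*k" and chL2: "chain (s2*(s*k)) L2" and s22: "2 \<le> s2"
        using chL a2 LC m2 by auto
      have a22: "\<forall>m\<in>set L2. 2 \<le> fst m" using a2 LC by simp
      have geL2: "\<forall>m\<in>set L2. s2*(s*k) \<le> snd m" using chain_ge[OF chL2 _ a22] sk s22 by simp
      have gtL2: "\<forall>r\<in>set L2. snd (s2,s*k) < snd r"
      proof
        fix r assume "r \<in> set L2"
        then have "s2*(s*k) \<le> snd r" using geL2 by auto
        moreover have "s*k < s2*(s*k)" using s22 sk by simp
        ultimately show "snd (s2,s*k) < snd r" by (metis snd_conv order_less_le_trans)
      qed
      have setAB': "set L = set A \<union> set B'" using ms by (metis set_mset_mset set_mset_union)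
      have inAB: "(s2, s*k) \<in> set A \<union> set B'" using setAB' LC m2 d2 by auto
      show ?thesis
      proof (cases "(s2, s*k) \<in> set B'")
        case True
        obtain B'' where "B' = (s2,s*k)#B''"
          using head_lemma[OF sB' True, of "set L2"] setAB' gtL2 LC m2 d2 by auto
        then have False using Cons.prems(7) B by simp
        then show ?thesis ..
      next
        case False
        then have inA: "(s2, s*k) \<in> set A" using inAB by auto
        obtain A' where A: "A = (s2,s*k)#A'"
          using head_lemma[OF Cons.prems(5) inA, of "set L2"] setAB' gtL2 LC m2 d2 by auto
        have "squeeze (cC k A (k * lsize ((s,k)#L))) = (s,k) # squeeze (cC (s2*(s*k)) A' ((s*k) * lsize L))"
          unfolding A lsz using s2 Cons.prems(2) by (simp add: squeeze_def)
        moreover have "B' = squeeze (cC (s2*(s*k)) A' ((s*k) * lsize L))"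
          using IH unfolding A using sk by (simp add: squeeze_def)
        ultimately show ?thesis using B m dk by simp
      qed
    qed
  qed
qed

lemma sorted_map_mono:
  assumes "sorted (map f xs)" "\<And>x y. f x \<le> f y \<Longrightarrow> g x \<le> g y"
  shows "sorted (map g xs)"
  using assms by (induction xs) auto

lemma lsize_append: "lsize (X @ Y) = lsize X * lsize Y"
  by (simp add: lsize_def)

theorem mainTheorem15:
  fixes N :: nat and A B :: layout
  assumes "0 < N"
    and "flat_layout A"
    and "complementable N A"
    and "flat_layout B"
    and "is_complement N A B"
    and "coalesced B"
    and "sorted_layout B"
  shows "B = comp_flat A N"
proof -
  have comp: "compact (A @ B)" and szN: "lsize A * lsize B = N"
    using assms(5) unfolding is_complement_def by auto
  have fAB: "flat_layout (A @ B)" using assms(2,4) unfolding flat_layout_def by auto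
  have lfeq: "layout_fun (A @ B) = lf (A @ B)" using layout_fun_lf by blast
  have bij: "bij_betw (lf (A @ B)) {0..<lsize (A @ B)} {0..<lcosize (A @ B)}"
    using comp unfolding compact_def lfeq .
  have c: "lsize (A @ B) = lcosize (A @ B)" using bij_betw_same_card[OF bij] by simp
  have ImgAB: "Img (A @ B) = {0..<lsize (A @ B)}"
    using bij lf_Img[OF fAB] c unfolding bij_betw_def by simp
  have cardAB: "card (Img (A @ B)) = lsize (A @ B)" using ImgAB by simp
  define A' where "A' = sort_layout (squeeze A)"
  define L where "L = sort_key snd (A' @ B)"
  have msA': "mset A' = mset (squeeze A)" unfolding A'_def sort_layout_def by simp
  have msL: "mset L = mset A' + mset B" unfolding L_def by simp
  have ms2: "mset L = mset (squeeze A @ B)" using msL msA' by simp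
  have ImgL0: "Img L = Img (A @ B)" using Img_perm[OF ms2] Img_squeeze by simp
  have lsL: "lsize L = lsize (A @ B)"
    using lsize_perm[OF ms2] lsize_squeeze by (simp add: lsize_append)
  have ImgL: "Img L = (\<lambda>x. 1*x) ` {0..<lsize L}" using ImgL0 ImgAB lsL by simp
  have cardL: "card (Img L) = lsize L" using ImgL0 cardAB lsL by simp
  have sortL: "sorted (map snd L)" unfolding L_def by simp
  have setL: "set L = set (squeeze A) \<union> set B"
    unfolding L_def A'_def sort_layout_def by simp
  have Bge: "\<forall>m\<in>set B. 2 \<le> fst m"
  proof
    fix m assume mB: "m \<in> set B"
    then obtain i where i: "i < length B" "B ! i = m" by (meson in_set_conv_nth)
    have "fst m \<noteq> 1" using assms(6) i unfolding coalesced_def by auto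
    moreover have "0 < fst m" using assms(4) mB unfolding flat_layout_def by auto
    ultimately show "2 \<le> fst m" by simp
  qed
  have Age: "\<forall>m\<in>set (squeeze A). 2 \<le> fst m"
  proof
    fix m assume mA: "m \<in> set (squeeze A)"
    then have "fst m \<noteq> 1" "m \<in> set A" unfolding squeeze_def by auto
    moreover have "0 < fst m" using assms(2) calculation(2) unfolding flat_layout_def by auto
    ultimately show "2 \<le> fst m" by simp
  qed
  have geL: "\<forall>m\<in>set L. 2 \<le> fst m" using Bge Age setL by auto
  have chL: "chain 1 L" by (rule chain_lemma[OF sortL geL _ ImgL cardL]) simp
  have sA': "sorted (map snd A')"
  proof -
    have "sorted (map (\<lambda>(s, d). (d, s)) A')" unfolding A'_def sort_layout_def by (rule sorted_sort_key)
    then show ?thesis by (rule sorted_map_mono) (auto split: prod.splits)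
  qed
  have sB: "sorted (map snd B)"
    using assms(7) unfolding sorted_layout_def mode_le_def sorted_iff_nth_Suc by auto
  have nB: "nm B" using coalesced_nm[OF assms(6)] .
  have "B = squeeze (cC 1 A' (1 * lsize L))"
    by (rule U[OF chL _ geL msL sA' sB nB]) simp
  then have BC: "B = squeeze (comp_C N A)"
    unfolding comp_C_cC A'_def[symmetric] using lsL szN by (simp add: lsize_append)
  have "comp_flat A N = merge_modes B" unfolding comp_flat_def coal_flat_def BC[symmetric] ..
  then show ?thesis using merge_nm[OF nB] by simp
qed

end
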